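(* Let $X$ be a set, $T:\mathcal P(X)\to\mathcal P(X)$ an order reversing quasi involution, and $X_0=\{x\in X: x\in T(\{x\})\}$. If $K\subseteq X$ satisfies $K=TK$, then $K\subseteq X_0$.
   Context: $\mathcal P(X)$ denotes the power set of $X$. A map $T:\mathcal P(X)\to\mathcal P(X)$ is an order reversing quasi involution if for all $K,L\subseteq X$: (i) $K\subseteq TTK$, and (ii) $L\subseteq K$ implies $TK\subseteq TL$. *)

theory Defs
  imports Main
begin

definition order_reversing_quasi_involution :: "'a set \<Rightarrow> ('a set \<Rightarrow> 'a set) \<Rightarrow> bool" where
  "order_reversing_quasi_involution X T \<longleftrightarrow>
     (\<forall>K. K \<subseteq> X \<longrightarrow> T K \<subseteq> X) \<and>
     (\<forall>K. K \<subseteq> X \<longrightarrow> K \<subseteq> T (T K)) \<and>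
     (\<forall>K L. K \<subseteq> X \<longrightarrow> L \<subseteq> K \<longrightarrow> T K \<subseteq> T L)"

end

theory Submission
  imports Defs
begin

theorem lemma6p1:
  fixes X :: "'a set" and T :: "'a set \<Rightarrow> 'a set" and K :: "'a set"
  assumes "order_reversing_quasi_involution X T"
    and "K \<subseteq> X"
    and "K = T K"
  shows "K \<subseteq> {x \<in> X. x \<in> T {x}}"
proof
  fix x assume x: "x \<in> K"
  have anti: "\<forall>K L. K \<subseteq> X \<longrightarrow> L \<subseteq> K \<longrightarrow> T K \<subseteq> T L"
    using assms(1) unfolding order_reversing_quasi_involution_def by (rule conjunct2[THEN conjunct2])
  have sub: "{x} \<subseteq> K" using x by simp
  have "T K \<subseteq> T {x}" using anti assms(2) sub by simp
  then have "x \<in> T {x}" using x assms(3) by auto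
  moreover have "x \<in> X" using x assms(2) by auto
  ultimately show "x \<in> {x \<in> X. x \<in> T {x}}" by simp
qed

end
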